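(* For every Hessenberg function $h$ on $\{1,\dots,n\}$, the $\mathbb{Q}$-linear extension $\Phi:M^{h,(n)}\to\operatorname{span}_{\mathbb{Q}}\mathcal{A}_h((n))$ is an isomorphism of graded vector spaces; equivalently, $\Phi$ is a degree-preserving bijection from the set of $(h,(n))$-fillings onto $\mathcal{A}_h((n))=\mathcal{B}_h$.
   Context: A Hessenberg function is $h:\{1,\dots,n\}\to\{1,\dots,n\}$, $h_i=h(i)$, with $i\le h_i$ and $h_i\le h_{i+1}$; degree tuple $\beta_i=i-\#\{k:h_k<i\}$; $\mathcal{B}_h=\{x_1^{\alpha_1}\cdots x_n^{\alpha_n}:0\le\alpha_i\le\beta_i-1\}$. An $(h,(n))$-filling is a permutation $T=w_1\cdots w_n$ of $1,\dots,n$ in one row with $w_t\le h(w_{t+1})$ for all $t$. A dimension pair of $T$ is $(a,b)$ with $b>a$, $b$ to the left of $a$, and, if $a$ is immediately followed by $c$, $b\le h(c)$. $\Phi(T)=\prod_{j=2}^n x_j^{|D^T_j|}$ with $D^T_j$ the set of dimension pairs $(a,j)$; $\mathcal{A}_h((n))$ is the set of all $\Phi(T)$. $M^{h,(n)}$ is the formal $\mathbb{Q}$-span of the $(h,(n))$-fillings, graded by number of dimension pairs; the span of monomials is graded by degree. *)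

theory Defs
  imports Main
begin

text \<open>Hessenberg function on {1..n}, encoded as h :: nat => nat (values outside {1..n} irrelevant).\<close>
definition hessenberg :: "nat \<Rightarrow> (nat \<Rightarrow> nat) \<Rightarrow> bool" where
  "hessenberg n h \<longleftrightarrow>
     (\<forall>i\<in>{1..n}. i \<le> h i \<and> h i \<le> n) \<and> (\<forall>i. 1 \<le> i \<and> i < n \<longrightarrow> h i \<le> h (Suc i))"

definition degtuple :: "nat \<Rightarrow> (nat \<Rightarrow> nat) \<Rightarrow> nat \<Rightarrow> nat" where
  "degtuple n h i = i - card {k\<in>{1..n}. h k < i}"

text \<open>Monomials x_1^a_1 ... x_n^a_n are encoded by their exponent vectors
  alpha :: nat => nat, supported on {1..n}.\<close>
definition monomials :: "nat \<Rightarrow> (nat \<Rightarrow> nat) set" where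
  "monomials n = {\<alpha>. \<forall>i. i \<notin> {1..n} \<longrightarrow> \<alpha> i = 0}"

definition Bh :: "nat \<Rightarrow> (nat \<Rightarrow> nat) \<Rightarrow> (nat \<Rightarrow> nat) set" where
  "Bh n h = {\<alpha> \<in> monomials n. \<forall>i\<in>{1..n}. \<alpha> i \<le> degtuple n h i - 1}"

text \<open>One-row (h,(n))-fillings T = w_1 ... w_n, as lists (0-indexed positions).\<close>
definition fillings :: "nat \<Rightarrow> (nat \<Rightarrow> nat) \<Rightarrow> nat list set" where
  "fillings n h = {w. distinct w \<and> set w = {1..n} \<and>
                     (\<forall>t. Suc t < length w \<longrightarrow> w ! t \<le> h (w ! Suc t))}"

definition dimpairs :: "(nat \<Rightarrow> nat) \<Rightarrow> nat list \<Rightarrow> (nat \<times> nat) set" where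
  "dimpairs h w = {(w ! j, w ! i) | i j. i < j \<and> j < length w \<and> w ! j < w ! i \<and>
                     (Suc j < length w \<longrightarrow> w ! i \<le> h (w ! Suc j))}"

definition Phi :: "nat \<Rightarrow> (nat \<Rightarrow> nat) \<Rightarrow> nat list \<Rightarrow> (nat \<Rightarrow> nat)" where
  "Phi n h w = (\<lambda>j. if 2 \<le> j \<and> j \<le> n then card {p \<in> dimpairs h w. snd p = j} else 0)"

definition Ah :: "nat \<Rightarrow> (nat \<Rightarrow> nat) \<Rightarrow> (nat \<Rightarrow> nat) set" where
  "Ah n h = Phi n h ` fillings n h"

definition mdeg :: "nat \<Rightarrow> (nat \<Rightarrow> nat) \<Rightarrow> nat" where
  "mdeg n \<alpha> = (\<Sum>i\<in>{1..n}. \<alpha> i)"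

end

theory Submission
  imports Defs
begin

definition ins :: "nat \<Rightarrow> nat \<Rightarrow> nat list \<Rightarrow> nat list" where
  "ins s x xs = take s xs @ x # drop s xs"

definition hr :: "nat \<Rightarrow> (nat \<Rightarrow> nat) \<Rightarrow> nat \<Rightarrow> nat" where
  "hr m h = (\<lambda>i. min (h i) m)"

definition VS :: "nat \<Rightarrow> (nat \<Rightarrow> nat) \<Rightarrow> nat list \<Rightarrow> nat set" where
  "VS m h w' = {s. s \<le> m \<and> (s < m \<longrightarrow> h (w' ! s) = Suc m)}"

lemma nth_ins: "s \<le> length xs \<Longrightarrow>
  ins s x xs ! i = (if i < s then xs ! i else if i = s then x else xs ! (i - 1))"
  by (auto simp: ins_def nth_append nth_Cons' nth_drop min_def)

lemma length_ins: "s \<le> length xs \<Longrightarrow> length (ins s x xs) = Suc (length xs)"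
  by (simp add: ins_def)

lemma set_ins: "set (ins s x xs) = insert x (set xs)"
proof -
  have "set xs = set (take s xs) \<union> set (drop s xs)"
    by (metis append_take_drop_id set_append)
  then show ?thesis by (auto simp: ins_def)
qed

lemma distinct_mid: "distinct (A @ x # B) \<longleftrightarrow> distinct (x # A @ B)"
  by auto

lemma distinct_ins: "distinct (ins s x xs) \<longleftrightarrow> distinct xs \<and> x \<notin> set xs"
  unfolding ins_def distinct_mid append_take_drop_id by auto

lemma hess_top: "hessenberg (Suc m) h \<Longrightarrow> h (Suc m) = Suc m"
proof -
  assume a: "hessenberg (Suc m) h"
  have "Suc m \<in> {1..Suc m}" by simp
  with a show ?thesis unfolding hessenberg_def by (meson le_antisym)
qed

lemma hess_le: "hessenberg n h \<Longrightarrow> x \<in> {1..n} \<Longrightarrow> h x \<le> n"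
  unfolding hessenberg_def by blast

lemma fill_len: "w \<in> fillings n h \<Longrightarrow> length w = n"
  unfolding fillings_def by (metis (mono_tags, lifting) card_atLeastAtMost diff_Suc_1 distinct_card mem_Collect_eq)

lemma fill_mem: "w \<in> fillings n h \<Longrightarrow> k < n \<Longrightarrow> w ! k \<in> {1..n}"
  using fill_len[of w n h] unfolding fillings_def by (metis (mono_tags, lifting) mem_Collect_eq nth_mem)

lemma ins_fill:
  assumes H: "hessenberg (Suc m) h" and W: "w' \<in> fillings m (hr m h)" and S: "s \<in> VS m h w'"
  shows "ins s (Suc m) w' \<in> fillings (Suc m) h"
proof -
  have L: "length w' = m" using fill_len[OF W] .
  have sm: "s \<le> m" using S by (simp add: VS_def)
  have mem: "\<And>k. k < m \<Longrightarrow> w' ! k \<in> {1..m}" using fill_mem[OF W] .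
  have adj: "\<And>t. Suc t < m \<Longrightarrow> w' ! t \<le> hr m h (w' ! Suc t)"
    using W L unfolding fillings_def by auto
  have vs: "s < m \<Longrightarrow> h (w' ! s) = Suc m" using S by (simp add: VS_def)
  have top: "h (Suc m) = Suc m" using hess_top[OF H] .
  have d: "distinct w'" and st: "set w' = {1..m}" using W unfolding fillings_def by auto
  let ?w = "ins s (Suc m) w'"
  have len: "length ?w = Suc m" using length_ins[of s w'] sm L by simp
  have A: "?w ! t \<le> h (?w ! Suc t)" if t: "Suc t < Suc m" for t
  proof -
    have N: "\<And>i. ?w ! i = (if i < s then w' ! i else if i = s then Suc m else w' ! (i - 1))"
      using nth_ins[of s w' "Suc m"] sm L by simp
    consider "Suc t < s" | "Suc t = s" | "t = s" | "t > s" by linarith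
    then show ?thesis
    proof cases
      case 1
      then have e1: "?w ! t = w' ! t" "?w ! Suc t = w' ! Suc t" using N by auto
      have "Suc t < m" using 1 sm by linarith
      then have "w' ! t \<le> hr m h (w' ! Suc t)" by (rule adj)
      then show ?thesis unfolding e1 hr_def by linarith
    next
      case 2
      then have e1: "?w ! t = w' ! t" "?w ! Suc t = Suc m" using N by auto
      have "t < m" using 2 sm by linarith
      then have "w' ! t \<le> m" using mem by auto
      then show ?thesis unfolding e1 top by linarith
    next
      case 3
      then have e1: "?w ! t = Suc m" "?w ! Suc t = w' ! t" using N by auto
      have "t < m" using t by linarith
      then show ?thesis unfolding e1 using vs 3 by simp
    next
      case 4
      then have e1: "?w ! t = w' ! (t - 1)" "?w ! Suc t = w' ! t" using N by auto
      have "Suc (t - 1) < m" "Suc (t-1) = t" using t 4 by auto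
      then have "w' ! (t - 1) \<le> hr m h (w' ! t)" using adj[of "t-1"] by simp
      then show ?thesis unfolding e1 hr_def by linarith
    qed
  qed
  have A': "\<forall>t. Suc t < length ?w \<longrightarrow> ?w ! t \<le> h (?w ! Suc t)" using A len by metis
  have B: "distinct ?w" using d st by (simp add: distinct_ins)
  have C: "set ?w = {1..Suc m}" using st by (simp add: set_ins atLeastAtMostSuc_conv)
  show ?thesis unfolding fillings_def mem_Collect_eq using A' B C by (intro conjI) assumption+
qed

lemma fill_decomp:
  assumes H: "hessenberg (Suc m) h" and W: "w \<in> fillings (Suc m) h"
  shows "\<exists>s w'. s \<in> VS m h w' \<and> w' \<in> fillings m (hr m h) \<and> w = ins s (Suc m) w'"
proof -
  have L: "length w = Suc m" using fill_len[OF W] .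
  have d: "distinct w" and st: "set w = {1..Suc m}" and adj: "\<And>t. Suc t < Suc m \<Longrightarrow> w ! t \<le> h (w ! Suc t)"
    using W L unfolding fillings_def by auto
  have "Suc m \<in> set w" using st by simp
  then obtain s where sl: "s < Suc m" and ws: "w ! s = Suc m" using L by (metis in_set_conv_nth)
  define w' where "w' = take s w @ drop (Suc s) w"
  have L': "length w' = m" using L sl by (simp add: w'_def)
  have weq: "w = ins s (Suc m) w'"
  proof -
    have "take s w' = take s w" "drop s w' = drop (Suc s) w" using sl L by (simp_all add: w'_def)
    then show ?thesis using id_take_nth_drop[of s w] sl L ws by (simp add: ins_def)
  qed
  have sm: "s \<le> m" using sl by simp
  have nth: "\<And>i. w ! i = (if i < s then w' ! i else if i = s then Suc m else w' ! (i - 1))"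
    using weq nth_ins[of s w' "Suc m"] sm L' by simp
  have d': "distinct w'" and nin: "Suc m \<notin> set w'" using d weq distinct_ins by metis+
  have st': "set w' = {1..m}"
  proof -
    have "insert (Suc m) (set w') = {1..Suc m}" using st weq set_ins by metis
    then have "set w' = {1..Suc m} - {Suc m}" using nin by (metis Diff_insert_absorb)
    also have "\<dots> = {1..m}" by auto
    finally show ?thesis .
  qed
  have mem: "\<And>k. k < m \<Longrightarrow> w' ! k \<in> {1..m}" using st' L' by (metis nth_mem)
  have hs: "h (w' ! s) = Suc m" if "s < m"
  proof -
    have "Suc m \<le> h (w ! Suc s)" using adj[of s] that ws by simp
    moreover have "w ! Suc s = w' ! s" using nth that by simp
    moreover have "h (w' ! s) \<le> Suc m" using hess_le[OF H, of "w' ! s"] mem[OF that] by simp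
    ultimately show ?thesis by simp
  qed
  have S: "s \<in> VS m h w'" using hs sm by (simp add: VS_def)
  have A: "w' ! t \<le> hr m h (w' ! Suc t)" if t: "Suc t < m" for t
  proof -
    have wt: "w' ! t \<le> m" using mem[of t] t by simp
    consider "Suc t < s" | "Suc t = s" | "t \<ge> s" by linarith
    then show ?thesis
    proof cases
      case 1
      then show ?thesis using adj[of t] nth wt t by (simp add: hr_def)
    next
      case 2
      then show ?thesis using hs wt t by (simp add: hr_def)
    next
      case 3
      then show ?thesis using adj[of "Suc t"] nth wt t by (simp add: hr_def)
    qed
  qed
  have A': "\<forall>t. Suc t < length w' \<longrightarrow> w' ! t \<le> hr m h (w' ! Suc t)" using A L' by metis
  have "w' \<in> fillings m (hr m h)" unfolding fillings_def mem_Collect_eq using d' st' A' by (intro conjI) assumption+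
  then show ?thesis using S weq by blast
qed

definition Q :: "nat \<Rightarrow> (nat \<Rightarrow> nat) \<Rightarrow> nat list \<Rightarrow> nat \<Rightarrow> nat set" where
  "Q m h w' s = {q. s \<le> q \<and> q < m \<and> (Suc q < m \<longrightarrow> h (w' ! Suc q) = Suc m)}"

lemma dimI: "i < j \<Longrightarrow> j < length w \<Longrightarrow> w ! j < w ! i \<Longrightarrow>
  (Suc j < length w \<longrightarrow> w ! i \<le> h (w ! Suc j)) \<Longrightarrow> (w ! j, w ! i) \<in> dimpairs h w"
  unfolding dimpairs_def by blast

lemma dimE: "p \<in> dimpairs h w \<Longrightarrow> \<exists>i j. p = (w ! j, w ! i) \<and> i < j \<and> j < length w \<and> w ! j < w ! i \<and>
  (Suc j < length w \<longrightarrow> w ! i \<le> h (w ! Suc j))"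
  unfolding dimpairs_def by blast

lemma dim_ins:
  assumes H: "hessenberg (Suc m) h" and W: "w' \<in> fillings m (hr m h)" and S: "s \<in> VS m h w'"
  shows "dimpairs h (ins s (Suc m) w') = dimpairs (hr m h) w' \<union> (\<lambda>q. (w' ! q, Suc m)) ` Q m h w' s"
proof -
  have L: "length w' = m" using fill_len[OF W] .
  have sm: "s \<le> m" using S by (simp add: VS_def)
  have mem: "\<And>k. k < m \<Longrightarrow> w' ! k \<in> {1..m}" using fill_mem[OF W] .
  have vs: "s < m \<Longrightarrow> h (w' ! s) = Suc m" using S by (simp add: VS_def)
  have top: "h (Suc m) = Suc m" using hess_top[OF H] .
  have hle: "\<And>k. k < m \<Longrightarrow> h (w' ! k) \<le> Suc m"
  proof -
    fix k assume "k < m"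
    then have "w' ! k \<in> {1..m}" by (rule mem)
    then have "w' ! k \<in> {1..Suc m}" by auto
    then show "h (w' ! k) \<le> Suc m" using hess_le[OF H] by blast
  qed
  define w where "w = ins s (Suc m) w'"
  have len: "length w = Suc m" using length_ins[of s w'] sm L by (simp add: w_def)
  have N: "\<And>i. w ! i = (if i < s then w' ! i else if i = s then Suc m else w' ! (i - 1))"
    using nth_ins[of s w' "Suc m"] sm L by (simp add: w_def)
  have "dimpairs h w \<subseteq> dimpairs (hr m h) w' \<union> (\<lambda>q. (w' ! q, Suc m)) ` Q m h w' s"
  proof
    fix p assume "p \<in> dimpairs h w"
    then obtain i j where p: "p = (w ! j, w ! i)" and ij: "i < j" and jl: "j < Suc m"
      and lt: "w ! j < w ! i" and c: "Suc j < Suc m \<longrightarrow> w ! i \<le> h (w ! Suc j)"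
      using dimE[of p h w] len by auto
    consider "j = s" | "j < s" | "j > s" by linarith
    then show "p \<in> dimpairs (hr m h) w' \<union> (\<lambda>q. (w' ! q, Suc m)) ` Q m h w' s"
    proof cases
      case 1
      then have "w ! j = Suc m" "w ! i = w' ! i" "i < m" using N ij sm by auto
      then show ?thesis using lt mem[of i] by auto
    next
      case 2
      then have e: "w ! j = w' ! j" "w ! i = w' ! i" "i < m" "j < m" using N ij sm by auto
      have mi: "w' ! i \<le> m" using mem[of i] e by auto
      have cc: "Suc j < m \<longrightarrow> w' ! i \<le> hr m h (w' ! Suc j)"
      proof
        assume sj: "Suc j < m"
        show "w' ! i \<le> hr m h (w' ! Suc j)"
        proof (cases "Suc j = s")
          case True
          then show ?thesis using vs sj mi by (simp add: hr_def)
        next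
          case False
          then have "w ! Suc j = w' ! Suc j" using N 2 by auto
          then show ?thesis using c sj mi e by (simp add: hr_def)
        qed
      qed
      have "(w' ! j, w' ! i) \<in> dimpairs (hr m h) w'"
        using dimI[of i j w' "hr m h"] ij e lt cc L by simp
      then show ?thesis using p e by simp
    next
      case 3
      then have ej: "w ! j = w' ! (j - 1)" "j - 1 < m" "s \<le> j - 1" using N jl by auto
      have ej2: "Suc j < Suc m \<Longrightarrow> w ! Suc j = w' ! j" using N 3 by auto
      consider "i = s" | "i < s" | "i > s" by linarith
      then show ?thesis
      proof cases
        case 1
        then have ei: "w ! i = Suc m" using N by auto
        have "Suc (j - 1) < m \<longrightarrow> h (w' ! Suc (j - 1)) = Suc m"
        proof
          assume a: "Suc (j - 1) < m"
          then have "Suc j < Suc m" "Suc (j - 1) = j" using 3 by auto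
          then show "h (w' ! Suc (j - 1)) = Suc m" using c ei ej2 hle[of j] a by auto
        qed
        then have "j - 1 \<in> Q m h w' s" using ej by (simp add: Q_def)
        then show ?thesis using p ei ej by auto
      next
        case 2
        then have ei: "w ! i = w' ! i" "i < m" using N sm by auto
        have mi: "w' ! i \<le> m" using mem[of i] ei by auto
        have cc: "Suc (j - 1) < m \<longrightarrow> w' ! i \<le> hr m h (w' ! Suc (j - 1))"
        proof
          assume a: "Suc (j - 1) < m"
          then have "Suc j < Suc m" "Suc (j - 1) = j" using 3 by auto
          then show "w' ! i \<le> hr m h (w' ! Suc (j - 1))" using c ei ej2 mi by (simp add: hr_def)
        qed
        have "i < j - 1" using 2 ej by linarith
        then have "(w' ! (j - 1), w' ! i) \<in> dimpairs (hr m h) w'"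
          using dimI[of i "j - 1" w' "hr m h"] ej ei lt cc L by simp
        then show ?thesis using p ei ej by simp
      next
        case 3
        then have ei: "w ! i = w' ! (i - 1)" "i - 1 < m" using N ij jl by auto
        have mi: "w' ! (i - 1) \<le> m" using mem[of "i - 1"] ei by auto
        have cc: "Suc (j - 1) < m \<longrightarrow> w' ! (i - 1) \<le> hr m h (w' ! Suc (j - 1))"
        proof
          assume a: "Suc (j - 1) < m"
          then have "Suc j < Suc m" "Suc (j - 1) = j" using \<open>s < j\<close> by auto
          then show "w' ! (i - 1) \<le> hr m h (w' ! Suc (j - 1))" using c ei ej2 mi by (simp add: hr_def)
        qed
        have "i - 1 < j - 1" using 3 ij by linarith
        then have "(w' ! (j - 1), w' ! (i - 1)) \<in> dimpairs (hr m h) w'"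
          using dimI[of "i - 1" "j - 1" w' "hr m h"] ej ei lt cc L by simp
        then show ?thesis using p ei ej by simp
      qed
    qed
  qed
  moreover have "dimpairs (hr m h) w' \<subseteq> dimpairs h w"
  proof
    fix p assume "p \<in> dimpairs (hr m h) w'"
    then obtain i j where p: "p = (w' ! j, w' ! i)" and ij: "i < j" and jl: "j < m"
      and lt: "w' ! j < w' ! i" and c: "Suc j < m \<longrightarrow> w' ! i \<le> hr m h (w' ! Suc j)"
      using dimE[of p "hr m h" w'] L by auto
    define e where "e = (\<lambda>k. if k < s then k else Suc k)"
    have ek: "\<And>k. w ! (e k) = w' ! k" using N by (simp add: e_def)
    have eij: "e i < e j" "e j < Suc m" using ij jl by (auto simp: e_def)
    have mi: "w' ! i \<le> m" using mem[of i] ij jl by auto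
    have cc: "Suc (e j) < Suc m \<longrightarrow> w ! i' \<le> h (w ! Suc (e j))" if i': "w ! i' = w' ! i" for i'
    proof
      assume a: "Suc (e j) < Suc m"
      show "w ! i' \<le> h (w ! Suc (e j))"
      proof (cases "j < s")
        case True
        show ?thesis
        proof (cases "Suc j = s")
          case True
          then have "w ! Suc (e j) = Suc m" using N \<open>j < s\<close> by (simp add: e_def)
          then show ?thesis using top mi i' by simp
        next
          case False
          then have "w ! Suc (e j) = w' ! Suc j" "Suc j < m" using N \<open>j < s\<close> sm by (auto simp: e_def)
          then show ?thesis using c i' by (simp add: hr_def)
        qed
      next
        case False
        then have "w ! Suc (e j) = w' ! Suc j" "Suc j < m" using N a by (auto simp: e_def)
        then show ?thesis using c i' by (simp add: hr_def)
      qed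
    qed
    have "(w ! (e j), w ! (e i)) \<in> dimpairs h w"
      using dimI[of "e i" "e j" w h] eij len ek lt cc[of "e i"] by simp
    then show "p \<in> dimpairs h w" using p ek by simp
  qed
  moreover have "(\<lambda>q. (w' ! q, Suc m)) ` Q m h w' s \<subseteq> dimpairs h w"
  proof
    fix p assume "p \<in> (\<lambda>q. (w' ! q, Suc m)) ` Q m h w' s"
    then obtain q where p: "p = (w' ! q, Suc m)" and q: "s \<le> q" "q < m"
      and c: "Suc q < m \<longrightarrow> h (w' ! Suc q) = Suc m" by (auto simp: Q_def)
    have e: "w ! Suc q = w' ! q" "w ! s = Suc m" using N q by auto
    have mq: "w' ! q \<le> m" using mem[of q] q by auto
    have cc: "Suc (Suc q) < Suc m \<longrightarrow> w ! s \<le> h (w ! Suc (Suc q))"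
    proof
      assume a: "Suc (Suc q) < Suc m"
      then have "w ! Suc (Suc q) = w' ! Suc q" using N q by auto
      then show "w ! s \<le> h (w ! Suc (Suc q))" using c a e by simp
    qed
    have "(w ! Suc q, w ! s) \<in> dimpairs h w"
      using dimI[of s "Suc q" w h] q len e mq cc by simp
    then show "p \<in> dimpairs h w" using p e by simp
  qed
  ultimately show ?thesis unfolding w_def by blast
qed

lemma dim_snd_le:
  assumes W: "w' \<in> fillings m h'" and p: "p \<in> dimpairs h' w'"
  shows "snd p \<in> {1..m}"
proof -
  obtain i j where "p = (w' ! j, w' ! i)" "i < j" "j < length w'"
    using dimE[OF p] by blast
  then show ?thesis using fill_mem[OF W, of i] fill_len[OF W] by simp
qed

lemma Phi_ins:
  assumes H: "hessenberg (Suc m) h" and W: "w' \<in> fillings m (hr m h)" and S: "s \<in> VS m h w'"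
  shows "Phi (Suc m) h (ins s (Suc m) w') = (Phi m (hr m h) w')(Suc m := card {s' \<in> VS m h w'. s < s'})"
proof
  fix j
  let ?D = "dimpairs (hr m h) w'"
  let ?I = "(\<lambda>q. (w' ! q, Suc m)) ` Q m h w' s"
  have D: "dimpairs h (ins s (Suc m) w') = ?D \<union> ?I" by (rule dim_ins[OF H W S])
  have L: "length w' = m" using fill_len[OF W] .
  have sD: "\<And>p. p \<in> ?D \<Longrightarrow> snd p \<in> {1..m}" using dim_snd_le[OF W] by blast
  show "Phi (Suc m) h (ins s (Suc m) w') j = ((Phi m (hr m h) w')(Suc m := card {s' \<in> VS m h w'. s < s'})) j"
  proof (cases "j = Suc m")
    case True
    have e1: "{p \<in> ?D \<union> ?I. snd p = Suc m} = ?I" using sD by fastforce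
    have inj: "inj_on (\<lambda>q. (w' ! q, Suc m)) (Q m h w' s)"
    proof (rule inj_onI)
      fix x y assume "x \<in> Q m h w' s" "y \<in> Q m h w' s" "(w' ! x, Suc m) = (w' ! y, Suc m)"
      moreover have "distinct w'" using W by (simp add: fillings_def)
      ultimately show "x = y" using L by (auto simp: Q_def nth_eq_iff_index_eq)
    qed
    have e2: "{s' \<in> VS m h w'. s < s'} = Suc ` Q m h w' s"
    proof
      show "{s' \<in> VS m h w'. s < s'} \<subseteq> Suc ` Q m h w' s"
      proof
        fix x assume x: "x \<in> {s' \<in> VS m h w'. s < s'}"
        then have "x - 1 \<in> Q m h w' s" "x = Suc (x - 1)" by (auto simp: VS_def Q_def)
        then show "x \<in> Suc ` Q m h w' s" by blast
      qed
      show "Suc ` Q m h w' s \<subseteq> {s' \<in> VS m h w'. s < s'}"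
        by (auto simp: VS_def Q_def)
    qed
    have "card ?I = card (Q m h w' s)" using card_image[OF inj] .
    also have "\<dots> = card {s' \<in> VS m h w'. s < s'}" unfolding e2 by (simp add: card_image)
    finally have c: "card ?I = card {s' \<in> VS m h w'. s < s'}" .
    show ?thesis
    proof (cases "m = 0")
      case True
      then have "{s' \<in> VS m h w'. s < s'} = {}" by (auto simp: VS_def)
      then have c0: "card {s' \<in> VS m h w'. s < s'} = 0" by (simp only: card.empty)
      show ?thesis using True \<open>j = Suc m\<close> c0 by (simp add: Phi_def)
    next
      case False
      then show ?thesis using True D e1 c by (simp add: Phi_def)
    qed
  next
    case False
    have "{p \<in> ?D \<union> ?I. snd p = j} = {p \<in> ?D. snd p = j}" using False by auto
    then show ?thesis using False D by (simp add: Phi_def)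
  qed
qed

lemma card_VS:
  assumes H: "hessenberg (Suc m) h" and W: "w' \<in> fillings m (hr m h)"
  shows "card (VS m h w') = degtuple (Suc m) h (Suc m)"
proof -
  have L: "length w' = m" using fill_len[OF W] .
  have d: "distinct w'" and st: "set w' = {1..m}" using W by (auto simp: fillings_def)
  let ?P = "{s. s < m \<and> h (w' ! s) = Suc m}"
  have V: "VS m h w' = insert m ?P"
  proof (rule set_eqI)
    fix x show "x \<in> VS m h w' \<longleftrightarrow> x \<in> insert m ?P" unfolding VS_def by (cases "x = m") auto
  qed
  have fP: "finite ?P" by (rule finite_subset[of _ "{..<m}"]) auto
  have mem: "\<And>k. k < m \<Longrightarrow> w' ! k \<in> {1..m}" using fill_mem[OF W] .
  have "nth w' ` ?P = {k \<in> {1..m}. h k = Suc m}"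
  proof
    show "nth w' ` ?P \<subseteq> {k \<in> {1..m}. h k = Suc m}"
    proof
      fix y assume "y \<in> nth w' ` ?P"
      then obtain i where "i < m" "h (w' ! i) = Suc m" "y = w' ! i" by blast
      then show "y \<in> {k \<in> {1..m}. h k = Suc m}" using mem[of i] by simp
    qed
    show "{k \<in> {1..m}. h k = Suc m} \<subseteq> nth w' ` ?P"
    proof
      fix k assume k: "k \<in> {k \<in> {1..m}. h k = Suc m}"
      then have "k \<in> set w'" using st by blast
      then obtain i where "i < length w'" "w' ! i = k" by (metis in_set_conv_nth)
      then show "k \<in> nth w' ` ?P" using k L by blast
    qed
  qed
  moreover have "inj_on (nth w') ?P" by (rule inj_on_nth[OF d]) (simp add: L)
  then have "card (nth w' ` ?P) = card ?P" by (rule card_image)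
  ultimately have cP: "card ?P = card {k \<in> {1..m}. h k = Suc m}" by simp
  have c1: "card (VS m h w') = Suc (card {k \<in> {1..m}. h k = Suc m})"
    using V fP cP by simp
  let ?A = "{k \<in> {1..Suc m}. h k < Suc m}"
  let ?B = "{k \<in> {1..Suc m}. h k = Suc m}"
  have hle: "\<And>k. k \<in> {1..Suc m} \<Longrightarrow> h k \<le> Suc m" using hess_le[OF H] by blast
  have U: "{1..Suc m} = ?A \<union> ?B"
  proof (rule set_eqI)
    fix k show "k \<in> {1..Suc m} \<longleftrightarrow> k \<in> ?A \<union> ?B"
    proof (cases "k \<in> {1..Suc m}")
      case True
      then have "h k \<le> Suc m" by (rule hle)
      then show ?thesis using True by auto
    next
      case False
      then show ?thesis by auto
    qed
  qed
  have "card (?A \<union> ?B) = card ?A + card ?B" by (rule card_Un_disjoint) auto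
  then have "card ?A + card ?B = Suc m" unfolding U[symmetric] by simp
  moreover have "?B = insert (Suc m) {k \<in> {1..m}. h k = Suc m}" using hess_top[OF H] by auto
  ultimately have "card ?A + Suc (card {k \<in> {1..m}. h k = Suc m}) = Suc m" by simp
  then have "degtuple (Suc m) h (Suc m) = Suc (card {k \<in> {1..m}. h k = Suc m})"
    unfolding degtuple_def by linarith
  then show ?thesis using c1 by simp
qed

lemma degtuple_hr:
  assumes H: "hessenberg (Suc m) h" and i: "i \<in> {1..m}"
  shows "degtuple m (hr m h) i = degtuple (Suc m) h i"
proof -
  have "{k \<in> {1..m}. hr m h k < i} = {k \<in> {1..Suc m}. h k < i}"
    using i hess_top[OF H] by (auto simp: hr_def le_Suc_eq)
  then show ?thesis by (simp add: degtuple_def)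
qed

lemma hess_hr:
  assumes H: "hessenberg (Suc m) h"
  shows "hessenberg m (hr m h)"
  unfolding hessenberg_def
proof (intro conjI ballI allI impI)
  fix i assume "i \<in> {1..m}"
  then have "i \<in> {1..Suc m}" by auto
  then have "i \<le> h i" using H unfolding hessenberg_def by blast
  with \<open>i \<in> {1..m}\<close> show "i \<le> hr m h i" by (simp add: hr_def)
  show "hr m h i \<le> m" by (simp add: hr_def)
next
  fix i assume a: "1 \<le> i \<and> i < m"
  then have "h i \<le> h (Suc i)" using H unfolding hessenberg_def by simp
  then show "hr m h i \<le> hr m h (Suc i)" by (simp add: hr_def)
qed

lemma rank_exists:
  "finite (V :: nat set) \<Longrightarrow> r < card V \<Longrightarrow> \<exists>s\<in>V. card {x \<in> V. s < x} = r"
proof (induction r arbitrary: V)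
  case 0
  then have "V \<noteq> {}" by auto
  then have M: "Max V \<in> V" and e: "{x \<in> V. Max V < x} = {}" using 0 by (auto simp: Max_ge leD)
  show ?case
  proof (rule bexI[of _ "Max V"])
    show "card {x \<in> V. Max V < x} = 0" unfolding e by simp
  qed (rule M)
next
  case (Suc r)
  have ne: "V \<noteq> {}" using Suc.prems by auto
  define M where "M = Max V"
  have M: "M \<in> V" using ne Suc.prems by (simp add: M_def)
  have "r < card (V - {M})" using Suc.prems M by simp
  then obtain s where s: "s \<in> V - {M}" "card {x \<in> V - {M}. s < x} = r"
    using Suc.IH[of "V - {M}"] Suc.prems by auto
  have "s \<le> M" using Max_ge[OF Suc.prems(1)] s by (simp add: M_def)
  then have sM: "s < M" using s by auto
  have "{x \<in> V. s < x} = insert M {x \<in> V - {M}. s < x}" using M sM by auto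
  then have "card {x \<in> V. s < x} = Suc r" using s Suc.prems by simp
  then show ?case using s by auto
qed

lemma rank_inj:
  assumes "finite (V :: nat set)" "a \<in> V" "b \<in> V" "card {x \<in> V. a < x} = card {x \<in> V. b < x}"
  shows "a = b"
proof (rule ccontr)
  assume "a \<noteq> b"
  then consider "a < b" | "b < a" by linarith
  then show False
  proof cases
    case 1
    then have "{x \<in> V. b < x} \<subset> {x \<in> V. a < x}" using assms by auto
    moreover have "finite {x \<in> V. a < x}" using assms(1) by simp
    ultimately have "card {x \<in> V. b < x} < card {x \<in> V. a < x}" by (metis psubset_card_mono)
    then show False using assms(4) by simp
  next
    case 2
    then have "{x \<in> V. a < x} \<subset> {x \<in> V. b < x}" using assms by auto
    moreover have "finite {x \<in> V. b < x}" using assms(1) by simp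
    ultimately have "card {x \<in> V. a < x} < card {x \<in> V. b < x}" by (metis psubset_card_mono)
    then show False using assms(4) by simp
  qed
qed

lemma rank_lt:
  assumes "finite (V :: nat set)" "a \<in> V"
  shows "card {x \<in> V. a < x} < card V"
proof -
  have "a \<notin> {x \<in> V. a < x}" by simp
  then have "{x \<in> V. a < x} \<subset> V" using assms(2) by blast
  then show ?thesis using assms(1) by (rule psubset_card_mono[rotated])
qed

lemma VS_finite: "finite (VS m h w')"
  by (rule finite_subset[of _ "{..m}"]) (auto simp: VS_def)

lemma VS_m: "m \<in> VS m h w'"
  by (simp add: VS_def)

lemma main_bij: "hessenberg n h \<Longrightarrow> bij_betw (Phi n h) (fillings n h) (Bh n h)"
proof (induction n arbitrary: h)
  case 0
  have F: "fillings 0 h = {[]}" by (auto simp: fillings_def)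
  have P: "Phi 0 h [] = (\<lambda>_. 0)" by (auto simp: Phi_def)
  have B: "Bh 0 h = {\<lambda>_. 0}"
  proof (rule set_eqI)
    fix \<alpha> :: "nat \<Rightarrow> nat"
    show "\<alpha> \<in> Bh 0 h \<longleftrightarrow> \<alpha> \<in> {\<lambda>_. 0}"
    proof
      assume "\<alpha> \<in> Bh 0 h"
      then have "\<forall>i. \<alpha> i = 0" by (simp add: Bh_def monomials_def)
      then show "\<alpha> \<in> {\<lambda>_. 0}" by auto
    qed (simp add: Bh_def monomials_def)
  qed
  show ?case unfolding F B by (simp add: bij_betw_def P)
next
  case (Suc m)
  have H: "hessenberg (Suc m) h" by (rule Suc.prems)
  let ?h' = "hr m h"
  have IH: "bij_betw (Phi m ?h') (fillings m ?h') (Bh m ?h')"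
    using Suc.IH hess_hr[OF H] by blast
  have Pz: "\<And>w. Phi m ?h' w (Suc m) = 0" by (simp add: Phi_def)
  have inj: "inj_on (Phi (Suc m) h) (fillings (Suc m) h)"
  proof (rule inj_onI)
    fix w1 w2 assume w1: "w1 \<in> fillings (Suc m) h" and w2: "w2 \<in> fillings (Suc m) h"
      and eq: "Phi (Suc m) h w1 = Phi (Suc m) h w2"
    obtain s1 w1' where s1: "s1 \<in> VS m h w1'" and f1: "w1' \<in> fillings m ?h'" and e1: "w1 = ins s1 (Suc m) w1'"
      using fill_decomp[OF H w1] by blast
    obtain s2 w2' where s2: "s2 \<in> VS m h w2'" and f2: "w2' \<in> fillings m ?h'" and e2: "w2 = ins s2 (Suc m) w2'"
      using fill_decomp[OF H w2] by blast
    let ?c1 = "card {s' \<in> VS m h w1'. s1 < s'}"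
    let ?c2 = "card {s' \<in> VS m h w2'. s2 < s'}"
    have eq2: "(Phi m ?h' w1')(Suc m := ?c1) = (Phi m ?h' w2')(Suc m := ?c2)"
      using eq Phi_ins[OF H f1 s1] Phi_ins[OF H f2 s2] e1 e2 by simp
    have "Phi m ?h' w1' = Phi m ?h' w2'"
    proof
      fix j show "Phi m ?h' w1' j = Phi m ?h' w2' j"
      proof (cases "j = Suc m")
        case True then show ?thesis using Pz by simp
      next
        case False then show ?thesis using fun_cong[OF eq2, of j] by simp
      qed
    qed
    then have ww: "w1' = w2'" using IH f1 f2 unfolding bij_betw_def by (metis inj_onD)
    have "?c1 = ?c2" using fun_cong[OF eq2, of "Suc m"] by simp
    then have "s1 = s2" using rank_inj[OF VS_finite s1] s2 ww by simp
    then show "w1 = w2" using e1 e2 ww by simp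
  qed
  have sub: "Phi (Suc m) h ` fillings (Suc m) h \<subseteq> Bh (Suc m) h"
  proof
    fix \<beta> assume "\<beta> \<in> Phi (Suc m) h ` fillings (Suc m) h"
    then obtain w where w: "w \<in> fillings (Suc m) h" and b: "\<beta> = Phi (Suc m) h w" by blast
    obtain s w' where s: "s \<in> VS m h w'" and f: "w' \<in> fillings m ?h'" and e: "w = ins s (Suc m) w'"
      using fill_decomp[OF H w] by blast
    let ?c = "card {s' \<in> VS m h w'. s < s'}"
    have b2: "\<beta> = (Phi m ?h' w')(Suc m := ?c)" using b e Phi_ins[OF H f s] by simp
    have a': "Phi m ?h' w' \<in> Bh m ?h'" using IH f by (meson bij_betw_apply)
    have cl: "?c < degtuple (Suc m) h (Suc m)"
      using rank_lt[OF VS_finite s] card_VS[OF H f] by simp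
    have mono: "\<beta> \<in> monomials (Suc m)"
      unfolding monomials_def
    proof (intro CollectI allI impI)
      fix i assume i: "i \<notin> {1..Suc m}"
      then have "i \<noteq> Suc m" "i \<notin> {1..m}" by auto
      then show "\<beta> i = 0" using a' b2 by (simp add: Bh_def monomials_def)
    qed
    have "\<forall>i\<in>{1..Suc m}. \<beta> i \<le> degtuple (Suc m) h i - 1"
    proof
      fix i assume i: "i \<in> {1..Suc m}"
      show "\<beta> i \<le> degtuple (Suc m) h i - 1"
      proof (cases "i = Suc m")
        case True then show ?thesis using b2 cl by simp
      next
        case False
        then have i': "i \<in> {1..m}" using i by auto
        then have "Phi m ?h' w' i \<le> degtuple m ?h' i - 1" using a' by (simp add: Bh_def)
        then show ?thesis using b2 False degtuple_hr[OF H i'] by simp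
      qed
    qed
    with mono show "\<beta> \<in> Bh (Suc m) h" unfolding Bh_def mem_Collect_eq by (rule conjI)
  qed
  have sup: "Bh (Suc m) h \<subseteq> Phi (Suc m) h ` fillings (Suc m) h"
  proof
    fix \<alpha> assume a: "\<alpha> \<in> Bh (Suc m) h"
    define \<alpha>' where "\<alpha>' = \<alpha>(Suc m := 0)"
    have am: "\<alpha> \<in> monomials (Suc m)" and ab: "\<forall>i\<in>{1..Suc m}. \<alpha> i \<le> degtuple (Suc m) h i - 1"
      using a by (auto simp: Bh_def)
    have "\<alpha>' \<in> monomials m"
      unfolding monomials_def
    proof (intro CollectI allI impI)
      fix i assume i: "i \<notin> {1..m}"
      show "\<alpha>' i = 0"
      proof (cases "i = Suc m")
        case True then show ?thesis by (simp add: \<alpha>'_def)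
      next
        case False then have "i \<notin> {1..Suc m}" using i by auto
        then show ?thesis using am False by (simp add: \<alpha>'_def monomials_def)
      qed
    qed
    moreover have "\<forall>i\<in>{1..m}. \<alpha>' i \<le> degtuple m ?h' i - 1"
    proof
      fix i assume i: "i \<in> {1..m}"
      then have "\<alpha> i \<le> degtuple (Suc m) h i - 1" using ab by auto
      then show "\<alpha>' i \<le> degtuple m ?h' i - 1" using i degtuple_hr[OF H i] by (simp add: \<alpha>'_def)
    qed
    ultimately have "\<alpha>' \<in> Bh m ?h'" unfolding Bh_def mem_Collect_eq by (rule conjI)
    moreover have "Bh m ?h' = Phi m ?h' ` fillings m ?h'" using IH by (simp add: bij_betw_def)
    ultimately have "\<alpha>' \<in> Phi m ?h' ` fillings m ?h'" by simp
    then obtain w' where f: "w' \<in> fillings m ?h'" and pw: "Phi m ?h' w' = \<alpha>'"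
      by (metis imageE)
    have "\<alpha> (Suc m) \<le> degtuple (Suc m) h (Suc m) - 1" using ab by simp
    moreover have "0 < card (VS m h w')" using VS_finite VS_m by (metis card_gt_0_iff empty_iff)
    ultimately have "\<alpha> (Suc m) < card (VS m h w')" using card_VS[OF H f] by linarith
    then obtain s where s: "s \<in> VS m h w'" and r: "card {s' \<in> VS m h w'. s < s'} = \<alpha> (Suc m)"
      using rank_exists[OF VS_finite] by blast
    have w: "ins s (Suc m) w' \<in> fillings (Suc m) h" by (rule ins_fill[OF H f s])
    have "Phi (Suc m) h (ins s (Suc m) w') = \<alpha>"
      using Phi_ins[OF H f s] pw r by (simp add: \<alpha>'_def)
    then show "\<alpha> \<in> Phi (Suc m) h ` fillings (Suc m) h" using w by (metis imageI)
  qed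
  show ?case unfolding bij_betw_def using inj sub sup by blast
qed

lemma mdeg_card:
  assumes W: "w \<in> fillings n h"
  shows "mdeg n (Phi n h w) = card (dimpairs h w)"
proof -
  let ?D = "dimpairs h w"
  have L: "length w = n" using fill_len[OF W] .
  have sD: "\<And>p. p \<in> ?D \<Longrightarrow> snd p \<in> {2..n}"
  proof -
    fix p assume p: "p \<in> ?D"
    then obtain i j where "p = (w ! j, w ! i)" "i < j" "j < length w" "w ! j < w ! i"
      using dimE[OF p] by blast
    then show "snd p \<in> {2..n}" using fill_mem[OF W, of i] fill_mem[OF W, of j] L by auto
  qed
  have fD: "finite ?D"
  proof (rule finite_subset[of _ "set w \<times> set w"])
    show "?D \<subseteq> set w \<times> set w" unfolding dimpairs_def by auto
  qed simp
  have U: "?D = (\<Union>i\<in>{1..n}. {p \<in> ?D. snd p = i})"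
  proof
    show "?D \<subseteq> (\<Union>i\<in>{1..n}. {p \<in> ?D. snd p = i})"
    proof
      fix p assume p: "p \<in> ?D"
      then have "snd p \<in> {1..n}" using sD[OF p] by simp
      then show "p \<in> (\<Union>i\<in>{1..n}. {p \<in> ?D. snd p = i})" using p by blast
    qed
  qed blast
  have "card ?D = (\<Sum>i\<in>{1..n}. card {p \<in> ?D. snd p = i})"
    by (subst U, rule card_UN_disjoint) (use fD in auto)
  also have "\<dots> = (\<Sum>i\<in>{1..n}. Phi n h w i)"
  proof (rule sum.cong)
    fix i assume i: "i \<in> {1..n}"
    show "card {p \<in> ?D. snd p = i} = Phi n h w i"
    proof (cases "i = 1")
      case True
      then have "{p \<in> ?D. snd p = i} = {}" using sD by fastforce
      then have c0: "card {p \<in> ?D. snd p = i} = 0" by (simp only: card.empty)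
      show ?thesis using True c0 by (simp add: Phi_def)
    next
      case False then show ?thesis using i by (simp add: Phi_def)
    qed
  qed simp
  finally show ?thesis by (simp add: mdeg_def)
qed

theorem mainTheorem19:
  fixes n :: nat and h :: "nat \<Rightarrow> nat"
  assumes "hessenberg n h"
  shows "bij_betw (Phi n h) (fillings n h) (Ah n h) \<and> Ah n h = Bh n h \<and>
         (\<forall>w\<in>fillings n h. mdeg n (Phi n h w) = card (dimpairs h w))"
proof -
  have B: "bij_betw (Phi n h) (fillings n h) (Bh n h)" by (rule main_bij[OF assms])
  then have A: "Ah n h = Bh n h" unfolding Ah_def bij_betw_def by simp
  show ?thesis using B A mdeg_card by simp
qed

end
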